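(* Let $K_1,K_2$ be finite simplicial complexes on disjoint vertex sets, $k\ge 2$, and $K=K_1\vee_kK_2$ a $k$-wedge sum. If $0\le i\le k-2$, then $B_i(K)$ is unbalanced.
   Context: $S_j(K)$ is the set of faces of cardinality $j+1$. The $k$-wedge sum $K_1\vee_kK_2$ is obtained from $K_1\cup K_2$ by identifying a $k$-face $\{v_0,\dots,v_k\}$ of $K_1$ with a $k$-face $\{u_0,\dots,u_k\}$ of $K_2$ via $v_j\mapsto u_j$. For an oriented complex $K$, $B_i(K)$ is the signed bipartite graph on $S_i(K)\cup S_{i+1}(K)$ with edges $\{G,\bar G\}$ for $G\subset\bar G$, signed by the boundary incidence sign $\mathrm{sgn}([G],\partial[\bar G])\in\{\pm1\}$ ($(-1)^j$ if $G$ is $\bar G$ minus its $j$-th vertex with agreeing orientation, negated otherwise). A signed graph is balanced if every cycle has positive sign product. *)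

theory Defs
  imports Main
begin

definition simplicial_complex :: "'a set set \<Rightarrow> bool" where
  "simplicial_complex K \<longleftrightarrow> finite K \<and> (\<forall>F\<in>K. finite F) \<and> (\<forall>F\<in>K. \<forall>G. G \<subseteq> F \<longrightarrow> G \<in> K)"

definition vertices :: "'a set set \<Rightarrow> 'a set" where
  "vertices K = \<Union>K"

definition faces_dim :: "nat \<Rightarrow> 'a set set \<Rightarrow> 'a set set" where
  "faces_dim j K = {F \<in> K. card F = j + 1}"

(* k-wedge sum: identify the k-face s1 of K1 with the k-face s2 of K2 via the bijection f
   (v_j \<mapsto> u_j); the quotient map sends v \<in> s1 to f v and fixes all other vertices. *)
definition wedge_map :: "'a set \<Rightarrow> ('a \<Rightarrow> 'a) \<Rightarrow> 'a \<Rightarrow> 'a" where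
  "wedge_map s1 f v = (if v \<in> s1 then f v else v)"

definition wedge_sum :: "'a set set \<Rightarrow> 'a set set \<Rightarrow> 'a set \<Rightarrow> 'a set \<Rightarrow> ('a \<Rightarrow> 'a) \<Rightarrow> 'a set set" where
  "wedge_sum K1 K2 s1 s2 f = ((\<lambda>F. wedge_map s1 f ` F) ` K1) \<union> K2"

definition is_k_wedge_sum :: "nat \<Rightarrow> 'a set set \<Rightarrow> 'a set set \<Rightarrow> 'a set set \<Rightarrow> bool" where
  "is_k_wedge_sum k K1 K2 K \<longleftrightarrow>
     (\<exists>s1 s2 f. s1 \<in> K1 \<and> card s1 = k + 1 \<and> s2 \<in> K2 \<and> card s2 = k + 1 \<and>
        bij_betw f s1 s2 \<and> K = wedge_sum K1 K2 s1 s2 f)"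

(* An orientation of K: each face gets an ordering of its vertices (representative of its
   orientation class). *)
definition orientation :: "'a set set \<Rightarrow> ('a set \<Rightarrow> 'a list) \<Rightarrow> bool" where
  "orientation K ori \<longleftrightarrow> (\<forall>F\<in>K. distinct (ori F) \<and> set (ori F) = F)"

definition before :: "'a list \<Rightarrow> 'a \<Rightarrow> 'a \<Rightarrow> bool" where
  "before xs a b \<longleftrightarrow> (\<exists>i j. i < j \<and> j < length xs \<and> xs ! i = a \<and> xs ! j = b)"

(* sign of the permutation taking ordering xs to ordering ys (same elements):
   +1 iff they define the same orientation *)
definition rel_sign :: "'a list \<Rightarrow> 'a list \<Rightarrow> int" where
  "rel_sign xs ys = (-1) ^ card {(a, b). a \<in> set xs \<and> b \<in> set xs \<and> before xs a b \<and> before ys b a}"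

(* sgn([G], \<partial>[H]) for G \<subset> H, |H| = |G|+1: H oriented as ori H, G = H minus its j-th vertex;
   (-1)^j if the induced ordering agrees with the orientation of G, negated otherwise *)
definition incidence_sign :: "('a set \<Rightarrow> 'a list) \<Rightarrow> 'a set \<Rightarrow> 'a set \<Rightarrow> int" where
  "incidence_sign ori G H =
     (let L = ori H; v = the_elem (H - G); j = (THE j. j < length L \<and> L ! j = v)
      in (-1) ^ j * rel_sign (remove1 v L) (ori G))"

definition is_cycle :: "'v set \<Rightarrow> ('v \<Rightarrow> 'v \<Rightarrow> bool) \<Rightarrow> 'v list \<Rightarrow> bool" where
  "is_cycle V E c \<longleftrightarrow> length c \<ge> 3 \<and> distinct c \<and> set c \<subseteq> V \<and>
     (\<forall>i < length c. E (c ! i) (c ! ((i + 1) mod length c)))"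

definition balanced :: "'v set \<Rightarrow> ('v \<Rightarrow> 'v \<Rightarrow> bool) \<Rightarrow> ('v \<Rightarrow> 'v \<Rightarrow> int) \<Rightarrow> bool" where
  "balanced V E s \<longleftrightarrow> (\<forall>c. is_cycle V E c \<longrightarrow>
     (\<Prod>i < length c. s (c ! i) (c ! ((i + 1) mod length c))) = 1)"

definition B_vertices :: "nat \<Rightarrow> 'a set set \<Rightarrow> 'a set set" where
  "B_vertices i K = faces_dim i K \<union> faces_dim (Suc i) K"

definition B_adj :: "nat \<Rightarrow> 'a set set \<Rightarrow> 'a set \<Rightarrow> 'a set \<Rightarrow> bool" where
  "B_adj i K X Y \<longleftrightarrow>
     (X \<in> faces_dim i K \<and> Y \<in> faces_dim (Suc i) K \<and> X \<subset> Y) \<or>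
     (Y \<in> faces_dim i K \<and> X \<in> faces_dim (Suc i) K \<and> Y \<subset> X)"

definition B_sign :: "('a set \<Rightarrow> 'a list) \<Rightarrow> 'a set \<Rightarrow> 'a set \<Rightarrow> int" where
  "B_sign ori X Y = (if X \<subset> Y then incidence_sign ori X Y else incidence_sign ori Y X)"

definition B_balanced :: "nat \<Rightarrow> 'a set set \<Rightarrow> ('a set \<Rightarrow> 'a list) \<Rightarrow> bool" where
  "B_balanced i K ori \<longleftrightarrow> balanced (B_vertices i K) (B_adj i K) (B_sign ori)"

end

theory Submission
  imports Defs
begin



lemma before_Nil[simp]: "\<not> before [] a b"
  by (simp add: before_def)

lemma before_Cons: "before (x#xs) a b \<longleftrightarrow> (a = x \<and> b \<in> set xs) \<or> before xs a b"
proof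
  assume "before (x#xs) a b"
  then obtain i j where ij: "i < j" "j < Suc (length xs)" "(x#xs)!i = a" "(x#xs)!j = b"
    by (auto simp: before_def)
  then obtain j' where j': "j = Suc j'" by (cases j) auto
  show "(a = x \<and> b \<in> set xs) \<or> before xs a b"
  proof (cases i)
    case 0 then show ?thesis using ij j' by auto
  next
    case (Suc i') then show ?thesis using ij j' unfolding before_def
      by (intro disjI2 exI[of _ i'] exI[of _ j']) auto
  qed
next
  assume "(a = x \<and> b \<in> set xs) \<or> before xs a b"
  then show "before (x#xs) a b"
  proof
    assume "a = x \<and> b \<in> set xs"
    then obtain j where "j < length xs" "xs!j = b" "a = x" by (auto simp: in_set_conv_nth)
    then show ?thesis unfolding before_def by (intro exI[of _ 0] exI[of _ "Suc j"]) auto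
  next
    assume "before xs a b"
    then obtain i j where "i < j" "j < length xs" "xs!i = a" "xs!j = b" by (auto simp: before_def)
    then show ?thesis unfolding before_def by (intro exI[of _ "Suc i"] exI[of _ "Suc j"]) auto
  qed
qed

lemma before_set: "before xs a b \<Longrightarrow> a \<in> set xs \<and> b \<in> set xs"
  by (induction xs) (auto simp: before_Cons)

lemma before_asym: "distinct xs \<Longrightarrow> before xs a b \<Longrightarrow> \<not> before xs b a"
  by (induction xs) (auto simp: before_Cons dest: before_set)

lemma before_irrefl: "distinct xs \<Longrightarrow> \<not> before xs a a"
  using before_asym by fastforce

lemma before_total: "distinct xs \<Longrightarrow> a \<in> set xs \<Longrightarrow> b \<in> set xs \<Longrightarrow> a \<noteq> b \<Longrightarrow> before xs a b \<or> before xs b a"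
  by (induction xs) (auto simp: before_Cons)

lemma before_remove1: "before (remove1 v xs) a b \<Longrightarrow> before xs a b"
  by (induction xs) (auto simp: before_Cons split: if_splits dest: set_mp[OF set_remove1_subset])

lemma prod_sign_card:
  assumes "finite S"
  shows "(\<Prod>x\<in>S. if Q x then -1 else 1 :: int) = (-1) ^ card {x\<in>S. Q x}"
proof -
  have "(\<Prod>x\<in>S. if Q x then -1 else 1 :: int) = (\<Prod>x\<in>{x\<in>S. Q x}. -1)"
    using assms by (simp add: prod.If_cases Int_def conj_commute)
  then show ?thesis by simp
qed

definition P :: "'a list \<Rightarrow> ('a \<times> 'a) set" where
  "P xs = {(a,b). before xs a b}"

definition e :: "'a list \<Rightarrow> 'a \<times> 'a \<Rightarrow> int" where
  "e ys p = (if before ys (fst p) (snd p) then 1 else -1)"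

lemma finite_P: "finite (P xs)"
proof -
  have "P xs \<subseteq> set xs \<times> set xs" by (auto simp: P_def dest: before_set)
  then show ?thesis by (rule finite_subset) auto
qed

lemma rel_prod:
  assumes "distinct xs" "distinct ys" "set xs = set ys"
  shows "rel_sign xs ys = (\<Prod>p\<in>P xs. e ys p)"
proof -
  have "(\<Prod>p\<in>P xs. e ys p) = (\<Prod>p\<in>P xs. if before ys (snd p) (fst p) then -1 else 1)"
  proof (rule prod.cong[OF refl])
    fix p assume "p \<in> P xs"
    then obtain a b where p: "p = (a,b)" "before xs a b" by (auto simp: P_def)
    then have "a \<noteq> b" "a \<in> set ys" "b \<in> set ys" using assms before_irrefl before_set by metis+
    then show "e ys p = (if before ys (snd p) (fst p) then -1 else 1)"
      using p assms before_total[of ys a b] before_asym[of ys a b] by (auto simp: e_def)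
  qed
  also have "\<dots> = (-1) ^ card {p\<in>P xs. before ys (snd p) (fst p)}"
    by (rule prod_sign_card[OF finite_P])
  also have "{p\<in>P xs. before ys (snd p) (fst p)} = {(a, b). a \<in> set xs \<and> b \<in> set xs \<and> before xs a b \<and> before ys b a}"
    by (auto simp: P_def dest: before_set)
  finally show ?thesis by (simp add: rel_sign_def)
qed

lemma P_reindex:
  assumes "distinct xs" "distinct ys" "set xs = set ys"
    and sym: "\<And>a b. a \<in> set xs \<Longrightarrow> b \<in> set xs \<Longrightarrow> g (a,b) = g (b,a)"
  shows "prod g (P xs) = prod g (P ys)"
proof -
  define h where "h p = (if before ys (fst p) (snd p) then p else (snd p, fst p))" for p :: "'a \<times> 'a"
  have bij: "bij_betw h (P xs) (P ys)"
  proof (rule bij_betw_imageI)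
    show "inj_on h (P xs)"
    proof (rule inj_onI)
      fix p q assume "p \<in> P xs" "q \<in> P xs" "h p = h q"
      then show "p = q" using assms(1) before_asym[OF assms(1)]
        by (cases p; cases q) (auto simp: h_def P_def split: if_splits)
    qed
    show "h ` P xs = P ys"
    proof
      show "h ` P xs \<subseteq> P ys"
      proof
        fix q assume "q \<in> h ` P xs"
        then obtain a b where ab: "before xs a b" "q = h (a,b)" by (auto simp: P_def)
        then have "a \<noteq> b" "a \<in> set ys" "b \<in> set ys" using assms before_irrefl before_set by metis+
        then show "q \<in> P ys" using ab before_total[OF assms(2)] by (auto simp: h_def P_def)
      qed
      show "P ys \<subseteq> h ` P xs"
      proof
        fix q assume "q \<in> P ys"
        then obtain a b where ab: "before ys a b" "q = (a,b)" by (auto simp: P_def)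
        then have "a \<noteq> b" "a \<in> set xs" "b \<in> set xs" using assms before_irrefl before_set by metis+
        then consider "before xs a b" | "before xs b a" using before_total[OF assms(1)] by blast
        then show "q \<in> h ` P xs"
        proof cases
          case 1 then show ?thesis using ab by (auto simp: h_def P_def intro!: image_eqI[of _ _ "(a,b)"])
        next
          case 2 then show ?thesis using ab before_asym[OF assms(2)]
            by (auto simp: h_def P_def intro!: image_eqI[of _ _ "(b,a)"])
        qed
      qed
    qed
  qed
  have "prod g (P ys) = prod (\<lambda>p. g (h p)) (P xs)"
    using prod.reindex_bij_betw[OF bij, of g] by simp
  also have "\<dots> = prod g (P xs)"
  proof (rule prod.cong[OF refl])
    fix p assume "p \<in> P xs"
    then obtain a b where "p = (a,b)" "before xs a b" by (auto simp: P_def)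
    then show "g (h p) = g p" using sym[of a b] before_set[of xs a b] by (auto simp: h_def)
  qed
  finally show ?thesis by simp
qed



lemma e_sq: "e ys p * e ys p = 1"
  by (simp add: e_def)

lemma rel_mult:
  assumes "distinct xs" "distinct ys" "distinct zs" "set xs = set ys" "set ys = set zs"
  shows "rel_sign xs zs = rel_sign xs ys * rel_sign ys zs"
proof -
  have "rel_sign xs zs = (\<Prod>p\<in>P xs. e zs p)" using assms by (simp add: rel_prod)
  also have "\<dots> = (\<Prod>p\<in>P xs. e ys p * (e ys p * e zs p))"
    by (rule prod.cong[OF refl]) (simp add: mult.assoc[symmetric] e_sq)
  also have "\<dots> = (\<Prod>p\<in>P xs. e ys p) * (\<Prod>p\<in>P xs. e ys p * e zs p)"
    by (rule prod.distrib)
  also have "(\<Prod>p\<in>P xs. e ys p * e zs p) = (\<Prod>p\<in>P ys. e ys p * e zs p)"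
  proof (rule P_reindex)
    fix a b assume ab: "a \<in> set xs" "b \<in> set xs"
    show "e ys (a, b) * e zs (a, b) = e ys (b, a) * e zs (b, a)"
    proof (cases "a = b")
      case False
      then show ?thesis using ab assms before_total[of ys a b] before_asym[of ys a b]
          before_total[of zs a b] before_asym[of zs a b]
        by (auto simp: e_def)
    qed simp
  qed (use assms in auto)
  also have "\<dots> = (\<Prod>p\<in>P ys. e zs p)"
    by (rule prod.cong[OF refl]) (auto simp: P_def e_def)
  finally show ?thesis using assms by (simp add: rel_prod)
qed

lemma rel_self: "distinct xs \<Longrightarrow> rel_sign xs xs = 1"
proof -
  assume d: "distinct xs"
  have "{(a, b). a \<in> set xs \<and> b \<in> set xs \<and> before xs a b \<and> before xs b a} = {}"
    using before_asym[OF d] by blast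
  then show ?thesis by (simp only: rel_sign_def card.empty power_0)
qed

lemma neg1_pow: "(-1::int)^n = 1 \<or> (-1::int)^n = -1"
  by (induction n) auto

lemma rel_sym:
  assumes "distinct xs" "distinct ys" "set xs = set ys"
  shows "rel_sign ys xs = rel_sign xs ys"
proof -
  have "rel_sign xs xs = rel_sign xs ys * rel_sign ys xs"
    by (rule rel_mult) (use assms in auto)
  then have 1: "rel_sign xs ys * rel_sign ys xs = 1"
    using rel_self[OF assms(1)] by simp
  have "rel_sign ys xs = 1 \<or> rel_sign ys xs = -1"
    unfolding rel_sign_def by (rule neg1_pow)
  then show ?thesis
  proof
    assume "rel_sign ys xs = 1" then show ?thesis using 1 by simp
  next
    assume "rel_sign ys xs = -1" then show ?thesis using 1 by simp
  qed
qed

lemma rel_Cons: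
  assumes "v \<notin> set xs" "v \<notin> set ys"
  shows "rel_sign (v#xs) (v#ys) = rel_sign xs ys"
proof -
  have pt: "(a \<in> set (v#xs) \<and> b \<in> set (v#xs) \<and> before (v#xs) a b \<and> before (v#ys) b a)
      = (a \<in> set xs \<and> b \<in> set xs \<and> before xs a b \<and> before ys b a)" for a b
  proof (cases "a = v \<or> b = v")
    case True
    have "\<not> before ys b v" "\<not> before xs v b" "\<not> before xs a v" "\<not> before ys v a"
      using assms before_set[of ys b v] before_set[of xs v b] before_set[of xs a v] before_set[of ys v a] by auto
    then show ?thesis using True assms unfolding before_Cons by auto
  next
    case False
    then show ?thesis unfolding before_Cons by auto
  qed
  have eq: "{(a, b). a \<in> set (v#xs) \<and> b \<in> set (v#xs) \<and> before (v#xs) a b \<and> before (v#ys) b a}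
      = {(a, b). a \<in> set xs \<and> b \<in> set xs \<and> before xs a b \<and> before ys b a}"
    by (simp only: pt)
  show ?thesis unfolding rel_sign_def eq by (rule refl)
qed



lemma rel_swap:
  assumes "distinct (x#y#R)"
  shows "rel_sign (x#y#R) (y#x#R) = -1"
proof -
  have eq: "{(a, b). a \<in> set (x#y#R) \<and> b \<in> set (x#y#R) \<and> before (x#y#R) a b \<and> before (y#x#R) b a}
      = {(x,y)}"
    using assms before_asym[of R] by (auto simp: before_Cons dest: before_set)
  show ?thesis unfolding rel_sign_def eq by simp
qed

lemma before_nth_set:
  assumes "distinct L" "j < length L"
  shows "{a. before L a (L!j)} = set (take j L)"
proof -
  have "before L a (L!j) \<longleftrightarrow> (\<exists>i<j. L!i = a)" for a
  proof
    assume "before L a (L!j)"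
    then obtain i j' where "i < j'" "j' < length L" "L!i = a" "L!j' = L!j" by (auto simp: before_def)
    moreover have "j' = j" using nth_eq_iff_index_eq[OF assms(1)] calculation assms(2) by blast
    ultimately show "\<exists>i<j. L!i = a" by blast
  next
    assume "\<exists>i<j. L!i = a"
    then show "before L a (L!j)" using assms(2) unfolding before_def by blast
  qed
  then show ?thesis using assms by (auto simp: in_set_conv_nth) (metis min_less_iff_conj nth_take length_take)+
qed



lemma rel_front:
  assumes "distinct L" "j < length L" "L!j = v"
  shows "rel_sign L (v # remove1 v L) = (-1)^j"
proof -
  have eq: "{(a, b). a \<in> set L \<and> b \<in> set L \<and> before L a b \<and> before (v # remove1 v L) b a}
     = (\<lambda>a. (a,v)) ` {a. before L a v}"
  proof -
    have "before (v # remove1 v L) b a \<and> before L a b \<longleftrightarrow> b = v \<and> before L a v" for a b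
      using assms before_asym[OF assms(1)] before_irrefl[OF assms(1)]
      by (auto simp: before_Cons dest: before_remove1 before_set)
    then show ?thesis by (auto dest: before_set)
  qed
  have c: "card ((\<lambda>a. (a,v)) ` {a. before L a v}) = j"
    using before_nth_set[OF assms(1,2)] assms
    by (simp add: card_image inj_on_def distinct_card)
  show ?thesis unfolding rel_sign_def eq c by simp
qed




lemma edge_sign:
  assumes G: "G = set RG" and H: "H = set RH" and d1: "distinct (v#RG)" and d2: "distinct RH"
    and s: "set RH = set (v#RG)"
    and oH: "distinct (ori H)" "set (ori H) = H" and oG: "distinct (ori G)" "set (ori G) = G"
  shows "incidence_sign ori G H = rel_sign (ori H) RH * rel_sign RH (v#RG) * rel_sign RG (ori G)"
proof -
  have vG: "v \<notin> G" using G d1 by simp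
  have Hv: "H - G = {v}" using assms by auto
  have vH: "v \<in> set (ori H)" using oH H s by simp
  then obtain j where j: "j < length (ori H)" "ori H ! j = v" by (metis in_set_conv_nth)
  have the: "(THE j. j < length (ori H) \<and> ori H ! j = v) = j"
    by (rule the_equality) (use j nth_eq_iff_index_eq[OF oH(1)] in auto)
  have inc: "incidence_sign ori G H = (-1)^j * rel_sign (remove1 v (ori H)) (ori G)"
    unfolding incidence_sign_def Let_def Hv the_elem_eq the ..
  have setrm: "set (remove1 v (ori H)) = G" using oH assms(1,2,5) vG by auto
  have drm: "distinct (remove1 v (ori H))" using oH by simp
  have vrm: "v \<notin> set (remove1 v (ori H))" using setrm vG by simp
  have "rel_sign (ori H) (v # ori G) = rel_sign (ori H) (v # remove1 v (ori H)) * rel_sign (v # remove1 v (ori H)) (v # ori G)"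
    by (rule rel_mult) (use oH oG setrm vrm vG Hv in auto)
  also have "\<dots> = (-1)^j * rel_sign (remove1 v (ori H)) (ori G)"
    using rel_front[OF oH(1) j] rel_Cons[OF vrm] vG oG by simp
  finally have 1: "incidence_sign ori G H = rel_sign (ori H) (v # ori G)" using inc by simp
  have "rel_sign (ori H) (v # ori G) = rel_sign (ori H) RH * rel_sign RH (v # ori G)"
    by (rule rel_mult) (use oH oG d2 vG s H G in auto)
  also have "rel_sign RH (v # ori G) = rel_sign RH (v#RG) * rel_sign (v#RG) (v # ori G)"
    by (rule rel_mult) (use oG d1 d2 vG s G in auto)
  also have "rel_sign (v#RG) (v # ori G) = rel_sign RG (ori G)"
    by (rule rel_Cons) (use d1 vG oG in auto)
  finally show ?thesis using 1 by (simp add: mult.assoc)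
qed




lemma prod6: "(\<Prod>i<6::nat. g i) = g 0 * g 1 * g 2 * g 3 * g 4 * (g 5::int)"
  by (simp add: eval_nat_numeral)
lemma lt6: "(i::nat) < 6 \<Longrightarrow> i = 0 \<or> i = 1 \<or> i = 2 \<or> i = 3 \<or> i = 4 \<or> i = 5"
  by linarith

lemma rel_sq: "rel_sign xs ys * rel_sign xs ys = 1"
proof -
  have "rel_sign xs ys = 1 \<or> rel_sign xs ys = -1" unfolding rel_sign_def by (rule neg1_pow)
  then show ?thesis by auto
qed

theorem mainTheorem7:
  fixes K1 K2 K :: "'a set set" and k i :: nat and ori :: "'a set \<Rightarrow> 'a list"
  assumes "simplicial_complex K1" and "simplicial_complex K2"
    and "vertices K1 \<inter> vertices K2 = {}"
    and "k \<ge> 2"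
    and "is_k_wedge_sum k K1 K2 K"
    and "orientation K ori"
    and "i \<le> k - 2"
  shows "\<not> B_balanced i K ori"
proof
  assume bal: "B_balanced i K ori"
  from assms(5) obtain s1 s2 f where s2: "s2 \<in> K2" "card s2 = k+1"
    and Kdef: "K = wedge_sum K1 K2 s1 s2 f" unfolding is_k_wedge_sum_def by blast
  have K2K: "K2 \<subseteq> K" using Kdef by (auto simp: wedge_sum_def)
  have fin: "finite s2" using assms(2) s2 by (auto simp: simplicial_complex_def)
  have sub: "\<And>G. G \<subseteq> s2 \<Longrightarrow> G \<in> K" using assms(2) s2 K2K by (auto simp: simplicial_complex_def)
  obtain xs where xs: "distinct xs" "set xs = s2" using finite_distinct_list[OF fin] by blast
  have lenxs: "length xs = k+1" using distinct_card[OF xs(1)] xs s2 by simp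
  define W where "W = take (i+3) xs"
  have lenW: "length W = i+3" using lenxs assms(4,7) by (simp add: W_def)
  have dW: "distinct W" "set W \<subseteq> s2" using xs by (auto simp: W_def dest: in_set_takeD)
  have "\<exists>a b c R0. W = a#b#c#R0" using lenW by (cases W; cases "tl W"; cases "tl (tl W)") auto
  then obtain a b c R0 where W: "W = a#b#c#R0" by blast
  have lenR0: "length R0 = i" using lenW W by simp
  have dist: "distinct (a#b#c#R0)" using dW W by simp
  have subs: "set (a#b#c#R0) \<subseteq> s2" using dW W by simp
  define Gab where "Gab = set (c#R0)"
  define Gac where "Gac = set (b#R0)"
  define Gbc where "Gbc = set (a#R0)"
  define Ha where "Ha = set (b#c#R0)"
  define Hb where "Hb = set (a#c#R0)"
  define Hc where "Hc = set (a#b#R0)"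
  have inK: "Gab \<in> K" "Gac \<in> K" "Gbc \<in> K" "Ha \<in> K" "Hb \<in> K" "Hc \<in> K"
    using subs by (auto simp: Gab_def Gac_def Gbc_def Ha_def Hb_def Hc_def intro!: sub)
  have cards: "card Gab = i+1" "card Gac = i+1" "card Gbc = i+1" "card Ha = i+2" "card Hb = i+2" "card Hc = i+2"
    using dist lenR0 by (simp_all add: Gab_def Gac_def Gbc_def Ha_def Hb_def Hc_def distinct_card)
  have F: "Gab \<in> faces_dim i K" "Gac \<in> faces_dim i K" "Gbc \<in> faces_dim i K"
    "Ha \<in> faces_dim (Suc i) K" "Hb \<in> faces_dim (Suc i) K" "Hc \<in> faces_dim (Suc i) K"
    using inK cards by (auto simp: faces_dim_def)
  have mem: "a \<notin> Gab" "b \<notin> Gab" "c \<in> Gab" "a \<notin> Gac" "b \<in> Gac" "c \<notin> Gac"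
    "a \<in> Gbc" "b \<notin> Gbc" "c \<notin> Gbc" "a \<notin> Ha" "b \<in> Ha" "c \<in> Ha"
    "a \<in> Hb" "b \<notin> Hb" "c \<in> Hb" "a \<in> Hc" "b \<in> Hc" "c \<notin> Hc"
    using dist by (auto simp: Gab_def Gac_def Gbc_def Ha_def Hb_def Hc_def)
  have ss: "Gab \<subseteq> Ha" "Gac \<subseteq> Ha" "Gac \<subseteq> Hc" "Gbc \<subseteq> Hc" "Gbc \<subseteq> Hb" "Gab \<subseteq> Hb"
    unfolding Gab_def Gac_def Gbc_def Ha_def Hb_def Hc_def by auto
  have ps: "Gab \<subset> Ha" "Gac \<subset> Ha" "Gac \<subset> Hc" "Gbc \<subset> Hc" "Gbc \<subset> Hb" "Gab \<subset> Hb"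
    using ss mem by blast+
  have nps: "\<not> Ha \<subset> Gac" "\<not> Hc \<subset> Gbc" "\<not> Hb \<subset> Gab"
    using mem by blast+
  have adj: "B_adj i K Gab Ha" "B_adj i K Ha Gac" "B_adj i K Gac Hc" "B_adj i K Hc Gbc"
    "B_adj i K Gbc Hb" "B_adj i K Hb Gab"
    unfolding B_adj_def using F ps by blast+
  define cyc where "cyc = [Gab, Ha, Gac, Hc, Gbc, Hb]"
  have lc: "length cyc = 6" by (simp add: cyc_def)
  have cyc: "is_cycle (B_vertices i K) (B_adj i K) cyc"
    unfolding is_cycle_def
  proof (intro conjI allI impI)
    show "3 \<le> length cyc" by (simp add: cyc_def)
    show "distinct cyc" unfolding cyc_def
      by (simp only: distinct.simps list.set insert_iff empty_iff; use mem in blast)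
    show "set cyc \<subseteq> B_vertices i K" using F by (auto simp: cyc_def B_vertices_def)
    fix j assume "j < length cyc"
    then have j6: "j < 6" using lc by simp
    then show "B_adj i K (cyc ! j) (cyc ! ((j + 1) mod length cyc))"
      using lt6[OF j6] adj unfolding lc by (elim disjE) (simp_all add: cyc_def)
  qed
  have one: "(\<Prod>j<6. B_sign ori (cyc ! j) (cyc ! ((j + 1) mod 6))) = 1"
  proof -
    have "(\<Prod>j<length cyc. B_sign ori (cyc ! j) (cyc ! ((j + 1) mod length cyc))) = 1"
      using bal cyc unfolding B_balanced_def balanced_def by blast
    then show ?thesis unfolding lc .
  qed
  have ori: "\<And>X. X \<in> K \<Longrightarrow> distinct (ori X) \<and> set (ori X) = X"
    using assms(6) unfolding orientation_def by blast
  have d_a: "distinct (b#c#R0)" "distinct (a#c#R0)" "distinct (a#b#R0)"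
    "distinct (b#c#R0)" "distinct (c#b#R0)" "distinct (b#a#R0)" "distinct (c#a#R0)"
    using dist by auto
  have e1: "incidence_sign ori Gab Ha = rel_sign (ori Ha) (b#c#R0) * rel_sign (b#c#R0) (b#c#R0) * rel_sign (c#R0) (ori Gab)"
    by (rule edge_sign) (use dist ori inK in \<open>auto simp: Gab_def Ha_def\<close>)
  have e2: "incidence_sign ori Gac Ha = rel_sign (ori Ha) (b#c#R0) * rel_sign (b#c#R0) (c#b#R0) * rel_sign (b#R0) (ori Gac)"
    by (rule edge_sign) (use dist ori inK in \<open>auto simp: Gac_def Ha_def\<close>)
  have e3: "incidence_sign ori Gac Hc = rel_sign (ori Hc) (a#b#R0) * rel_sign (a#b#R0) (a#b#R0) * rel_sign (b#R0) (ori Gac)"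
    by (rule edge_sign) (use dist ori inK in \<open>auto simp: Gac_def Hc_def\<close>)
  have e4: "incidence_sign ori Gbc Hc = rel_sign (ori Hc) (a#b#R0) * rel_sign (a#b#R0) (b#a#R0) * rel_sign (a#R0) (ori Gbc)"
    by (rule edge_sign) (use dist ori inK in \<open>auto simp: Gbc_def Hc_def\<close>)
  have e5: "incidence_sign ori Gbc Hb = rel_sign (ori Hb) (a#c#R0) * rel_sign (a#c#R0) (c#a#R0) * rel_sign (a#R0) (ori Gbc)"
    by (rule edge_sign) (use dist ori inK in \<open>auto simp: Gbc_def Hb_def\<close>)
  have e6: "incidence_sign ori Gab Hb = rel_sign (ori Hb) (a#c#R0) * rel_sign (a#c#R0) (a#c#R0) * rel_sign (c#R0) (ori Gab)"
    by (rule edge_sign) (use dist ori inK in \<open>auto simp: Gab_def Hb_def\<close>)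
  have r: "rel_sign (b#c#R0) (b#c#R0) = 1" "rel_sign (a#b#R0) (a#b#R0) = 1" "rel_sign (a#c#R0) (a#c#R0) = 1"
    "rel_sign (b#c#R0) (c#b#R0) = -1" "rel_sign (a#b#R0) (b#a#R0) = -1" "rel_sign (a#c#R0) (c#a#R0) = -1"
    using dist by (auto intro!: rel_self rel_swap)
  have "(\<Prod>j<6. B_sign ori (cyc ! j) (cyc ! ((j + 1) mod 6))) =
     incidence_sign ori Gab Ha * incidence_sign ori Gac Ha * incidence_sign ori Gac Hc *
     incidence_sign ori Gbc Hc * incidence_sign ori Gbc Hb * incidence_sign ori Gab Hb"
    unfolding prod6 using ps nps by (simp add: cyc_def B_sign_def)
  also have "\<dots> = -1"
  proof -
    define xa where "xa = rel_sign (ori Ha) (b#c#R0)"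
    define xb where "xb = rel_sign (ori Hb) (a#c#R0)"
    define xc where "xc = rel_sign (ori Hc) (a#b#R0)"
    define yab where "yab = rel_sign (c#R0) (ori Gab)"
    define yac where "yac = rel_sign (b#R0) (ori Gac)"
    define ybc where "ybc = rel_sign (a#R0) (ori Gbc)"
    have sq: "xa*xa = 1" "xb*xb = 1" "xc*xc = 1" "yab*yab = 1" "yac*yac=1" "ybc*ybc=1"
      by (simp_all add: xa_def xb_def xc_def yab_def yac_def ybc_def rel_sq)
    have "incidence_sign ori Gab Ha * incidence_sign ori Gac Ha * incidence_sign ori Gac Hc *
     incidence_sign ori Gbc Hc * incidence_sign ori Gbc Hb * incidence_sign ori Gab Hb
      = - ((xa*xa)*(xb*xb)*(xc*xc)*(yab*yab)*(yac*yac)*(ybc*ybc))"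
      unfolding e1 e2 e3 e4 e5 e6 r xa_def[symmetric] xb_def[symmetric] xc_def[symmetric]
        yab_def[symmetric] yac_def[symmetric] ybc_def[symmetric]
      by (simp only: mult_ac mult_minus_left mult_minus_right minus_minus)
    then show ?thesis using sq by simp
  qed
  finally show False using one by simp
qed


end
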